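(* Let $d\geq 2$ and let $\mathcal{A}=\{g_1,\dots,g_r\}$ with each $g_i \in SU(d)\cap M_d(\overline{\mathbb{Q}})$ (i.e. each $g_i$ is a special unitary $d\times d$ matrix all of whose entries are algebraic numbers), such that the group generated by $\mathcal{A}$ and the inverses of its elements is dense in $SU(d)$. For $U\in SU(d)$ and $\epsilon>0$ define the gate complexity $$C_\epsilon(U)=\min\Big\{\sum_{j=1}^k |n_j| : \|g_{i_1}^{n_1}g_{i_2}^{n_2}\cdots g_{i_k}^{n_k}-U\|<\epsilon\Big\},$$ the minimum being over all $k\in\mathbb{N}$, $i_j\in\{1,\dots,r\}$ and $n_1,\dots,n_k\in\mathbb{Z}$, where $\|A\|=[\mathrm{Tr}(A^\dagger A)]^{1/2}$. Then for every $U\in SU(d)$ and every $\delta>0$ there exist $U'\in SU(d)$ with $\|U-U'\|<\delta$ and a constant $D=D(\mathcal{A},U')>1$ such that $$C_\epsilon(U') > \frac{1}{\log D}\log\left(\frac{1}{\epsilon}\right)+\mathcal{O}(\epsilon^0)\quad\text{as }\epsilon\to 0,$$ i.e. there is a constant $c$ such that $C_\epsilon(U') > \frac{1}{\log D}\log(1/\epsilon)+c$ for all sufficiently small $\epsilon>0$.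
   Context: $\overline{\mathbb{Q}}$ denotes the field of algebraic numbers and $M_d(\overline{\mathbb{Q}})$ the set of $d\times d$ matrices with entries in $\overline{\mathbb{Q}}$. *)

theory Defs
  imports "HOL-Analysis.Analysis" "HOL-Computational_Algebra.Polynomial"
begin

type_synonym 'n cmat = "complex^'n^'n"

definition adjoint_mat :: "'n::finite cmat \<Rightarrow> 'n cmat" where
  "adjoint_mat A = (\<chi> i j. cnj (A $ j $ i))"

definition hs_norm :: "'n::finite cmat \<Rightarrow> real" where
  "hs_norm A = sqrt (Re (trace (adjoint_mat A ** A)))"

text \<open>Special unitary group SU(d), d = CARD('n).\<close>
definition SU :: "'n::finite cmat set" where
  "SU = {A. adjoint_mat A ** A = mat 1 \<and> det A = 1}"

definition algebraic_mat :: "'n::finite cmat \<Rightarrow> bool" where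
  "algebraic_mat A \<longleftrightarrow> (\<forall>i j. algebraic (A $ i $ j))"

definition mat_ipow :: "'n::finite cmat \<Rightarrow> int \<Rightarrow> 'n cmat" where
  "mat_ipow g n = (if n \<ge> 0 then ((\<lambda>M. g ** M) ^^ nat n) (mat 1)
                   else ((\<lambda>M. matrix_inv g ** M) ^^ nat (- n)) (mat 1))"

text \<open>A word is a list of pairs (i, n) standing for g_i^n; its value is the ordered product.\<close>
definition word_val :: "'n::finite cmat list \<Rightarrow> (nat \<times> int) list \<Rightarrow> 'n cmat" where
  "word_val gs w = foldr (\<lambda>(i, n) M. mat_ipow (gs ! i) n ** M) w (mat 1)"

definition valid_word :: "'n::finite cmat list \<Rightarrow> (nat \<times> int) list \<Rightarrow> bool" where
  "valid_word gs w \<longleftrightarrow> (\<forall>(i, n) \<in> set w. i < length gs)"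

definition word_cost :: "(nat \<times> int) list \<Rightarrow> nat" where
  "word_cost w = sum_list (map (\<lambda>(i, n). nat \<bar>n\<bar>) w)"

definition generated_group :: "'n::finite cmat list \<Rightarrow> 'n cmat set" where
  "generated_group gs = {word_val gs w | w. valid_word gs w}"

definition gate_complexity :: "'n::finite cmat list \<Rightarrow> real \<Rightarrow> 'n cmat \<Rightarrow> nat" where
  "gate_complexity gs eps U =
     (LEAST c. \<exists>w. valid_word gs w \<and> word_cost w = c \<and> hs_norm (word_val gs w - U) < eps)"

end

theory Submission
  imports Defs
begin


lemma hs_norm_eq: "hs_norm (A::'n::finite cmat) = norm A"
proof -
  have "Re (trace (adjoint_mat A ** A)) = (\<Sum>i\<in>UNIV. \<Sum>k\<in>UNIV. (cmod (A$k$i))^2)"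
    by (simp add: trace_def adjoint_mat_def matrix_matrix_mult_def Re_sum
        complex_mult_cnj cmod_power2 power2_eq_square[symmetric] del: of_real_power)
  also have "\<dots> = (\<Sum>k\<in>UNIV. \<Sum>i\<in>UNIV. (cmod (A$k$i))^2)" by (rule sum.swap)
  also have "\<dots> = (\<Sum>k\<in>UNIV. (norm (A$k))^2)"
    by (simp add: norm_vec_def L2_set_def sum_nonneg)
  finally show ?thesis by (simp add: hs_norm_def norm_vec_def L2_set_def)
qed

lemma adj_mult: "adjoint_mat (A ** B) = adjoint_mat B ** adjoint_mat (A::'n::finite cmat)"
  by (simp add: adjoint_mat_def matrix_matrix_mult_def vec_eq_iff mult.commute)

lemma adj_adj: "adjoint_mat (adjoint_mat A) = A"
  by (simp add: adjoint_mat_def vec_eq_iff)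

lemma unit_norm:
  assumes "adjoint_mat U ** U = mat 1"
  shows "norm (U ** X) = norm (X::'n::finite cmat)"
proof -
  have "adjoint_mat (U ** X) ** (U ** X) = adjoint_mat X ** X"
    by (simp add: adj_mult matrix_mul_assoc) (metis assms matrix_mul_assoc matrix_mul_lid)
  then show ?thesis by (metis hs_norm_eq hs_norm_def)
qed

lemma SU_mult: assumes "A \<in> SU" "B \<in> SU" shows "A ** B \<in> (SU::'n::finite cmat set)"
proof -
  have "adjoint_mat (A ** B) ** (A ** B) = adjoint_mat B ** (adjoint_mat A ** A) ** B"
    by (simp add: adj_mult matrix_mul_assoc)
  then show ?thesis using assms by (simp add: SU_def det_mul)
qed

definition dg :: "'n::finite \<Rightarrow> 'n \<Rightarrow> real \<Rightarrow> 'n cmat" where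
  "dg a b t = (\<chi> i j. if i = j then (if i = a then exp (\<i> * of_real t)
      else if i = b then exp (- (\<i> * of_real t)) else 1) else 0)"

lemma dg_SU: assumes "a \<noteq> b" shows "dg a b t \<in> SU"
proof -
  let ?D = "dg a b t"
  have off: "\<And>k i. k \<noteq> i \<Longrightarrow> ?D $ k $ i = 0" by (simp add: dg_def)
  have s: "(\<Sum>k\<in>UNIV. cnj (?D$k$i) * ?D$k$j) = cnj (?D$i$i) * ?D$i$j" for i j
  proof -
    have "(\<Sum>k\<in>UNIV. cnj (?D$k$i) * ?D$k$j) = cnj (?D$i$i) * ?D$i$j + (\<Sum>k\<in>UNIV-{i}. cnj (?D$k$i) * ?D$k$j)"
      by (subst sum.remove[of _ i]) auto
    also have "(\<Sum>k\<in>UNIV-{i}. cnj (?D$k$i) * ?D$k$j) = 0"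
      by (rule sum.neutral) (auto simp: off)
    finally show ?thesis by simp
  qed
  have u: "cnj z * z = 1" if "cmod z = 1" for z :: complex
  proof -
    have "cnj z * z = z * cnj z" by (rule mult.commute)
    also have "\<dots> = of_real ((cmod z)^2)" by (rule complex_norm_square[symmetric])
    finally show ?thesis using that by simp
  qed
  have dd: "cmod (?D $ i $ i) = 1" for i by (simp add: dg_def)
  have "adjoint_mat (dg a b t) ** dg a b t = mat 1"
  proof -
    have "(\<Sum>k\<in>UNIV. cnj (?D$k$i) * ?D$k$j) = (if i = j then 1 else 0)" for i j
      unfolding s using u[OF dd[of i]] off[of i j] by auto
    then show ?thesis
      by (simp add: adjoint_mat_def matrix_matrix_mult_def vec_eq_iff mat_def)
  qed
  moreover have "det (dg a b t) = 1"
  proof -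
    have "det (dg a b t) = (\<Prod>i\<in>UNIV. dg a b t $ i $ i)"
      by (rule det_diagonal) (simp add: dg_def)
    also have "\<dots> = (\<Prod>i\<in>{a,b}. dg a b t $ i $ i)"
      by (rule prod.mono_neutral_right) (auto simp: dg_def)
    also have "\<dots> = exp (\<i> * of_real t) * exp (- (\<i> * of_real t))" using assms by (simp add: dg_def)
    also have "\<dots> = 1" by (simp flip: exp_add)
    finally show ?thesis .
  qed
  ultimately show ?thesis by (simp add: SU_def)
qed
lemma sin_lb: assumes "0 \<le> (y::real)" "y \<le> 1" shows "y / 2 \<le> sin y"
proof (cases "y = 0")
  case False
  then have "0 < y" using assms by simp
  from MVT2[OF this, of sin cos] obtain z where z: "0 < z" "z < y" "sin y - sin 0 = (y - 0) * cos z"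
    by (auto intro: DERIV_sin)
  have "cos 1 \<le> cos z" using z assms by (intro cos_monotone_0_pi_le) (use pi_gt3 in auto)
  moreover have "cos (pi/3) \<le> cos 1" by (intro cos_monotone_0_pi_le) (use pi_gt3 in auto)
  ultimately have "1/2 \<le> cos z" by (simp add: cos_60)
  then show ?thesis using z \<open>0 < y\<close> by (simp add: mult_left_mono[of "1/2" "cos z" y, simplified])
qed simp

lemma abs_sin_lb: assumes "\<bar>y::real\<bar> \<le> 1" shows "\<bar>y\<bar> / 2 \<le> \<bar>sin y\<bar>"
proof (cases "y \<ge> 0")
  case True then show ?thesis using sin_lb[of y] assms by simp
next
  case False then show ?thesis using sin_lb[of "-y"] assms by simp
qed

lemma exp_i_diff: "cmod (exp (\<i> * of_real t) - exp (\<i> * of_real s)) = 2 * \<bar>sin ((t - s) / 2)\<bar>"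
proof -
  have "exp (\<i> * of_real t) - exp (\<i> * of_real s) = exp (\<i> * of_real s) * (exp (\<i> * of_real (t - s)) - 1)"
    by (simp add: algebra_simps flip: exp_add)
  then show ?thesis using dist_exp_i_1[of "t - s"] by (simp add: norm_mult del: of_real_diff)
qed

lemma exp_i_close: "cmod (1 - exp (\<i> * of_real t)) \<le> \<bar>t\<bar>"
proof -
  have "cmod (1 - exp (\<i> * of_real t)) = cmod (exp (\<i> * of_real t) - 1)" by (simp add: norm_minus_commute)
  also have "\<dots> = 2 * \<bar>sin (t/2)\<bar>" by (rule dist_exp_i_1)
  also have "\<dots> \<le> 2 * \<bar>t/2\<bar>" using abs_sin_x_le_abs_x[of "t/2"] by linarith
  finally show ?thesis by simp
qed

lemma norm_sq: "norm (A::'n::finite cmat) = sqrt (\<Sum>k\<in>UNIV. \<Sum>i\<in>UNIV. (cmod (A$k$i))^2)"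
  by (simp add: norm_vec_def L2_set_def sum_nonneg)

lemma dg_close: fixes a b :: "'n::finite" shows "norm (mat 1 - dg a b t) \<le> sqrt (real CARD('n)) * \<bar>t\<bar>"
proof -
  let ?X = "mat 1 - dg a b t :: 'n cmat"
  have off: "\<And>k i. k \<noteq> i \<Longrightarrow> ?X $ k $ i = 0" by (simp add: dg_def mat_def)
  have r: "(\<Sum>i\<in>UNIV. (cmod (?X$k$i))^2) = (cmod (?X$k$k))^2" for k
  proof -
    have "(\<Sum>i\<in>UNIV. (cmod (?X$k$i))^2) = (cmod (?X$k$k))^2 + (\<Sum>i\<in>UNIV-{k}. (cmod (?X$k$i))^2)"
      by (subst sum.remove[of _ k]) auto
    also have "(\<Sum>i\<in>UNIV-{k}. (cmod (?X$k$i))^2) = 0"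
      by (intro sum.neutral ballI) (simp add: dg_def mat_def)
    finally show ?thesis by simp
  qed
  have e: "cmod (?X$k$k) \<le> \<bar>t\<bar>" for k
  proof -
    have m: "exp (- (\<i> * complex_of_real t)) = exp (\<i> * complex_of_real (-t))" by simp
    have "cmod (1 - exp (- (\<i> * complex_of_real t))) \<le> \<bar>t\<bar>"
      using exp_i_close[of "-t"] by (simp only: m)
    then show ?thesis
      using exp_i_close[of t] by (simp add: dg_def mat_def)
  qed
  have "norm ?X = sqrt (\<Sum>k\<in>UNIV. (cmod (?X$k$k))^2)" unfolding norm_sq r ..
  also have "\<dots> \<le> sqrt (\<Sum>k\<in>(UNIV::'n set). t^2)"
    by (intro real_sqrt_le_mono sum_mono) (metis e abs_le_square_iff abs_norm_cancel power2_abs)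
  also have "\<dots> = sqrt (real CARD('n)) * \<bar>t\<bar>" by (simp add: real_sqrt_mult)
  finally show ?thesis .
qed

lemma dg_sep: assumes "\<bar>t - s\<bar> \<le> 1"
  shows "\<bar>t - s\<bar> / 2 \<le> norm (dg a b t - dg a b s)"
proof -
  have "\<bar>t - s\<bar> / 2 \<le> 2 * \<bar>sin ((t - s) / 2)\<bar>"
    using abs_sin_lb[of "(t-s)/2"] assms by simp
  also have "\<dots> = cmod ((dg a b t - dg a b s) $ a $ a)" by (simp add: dg_def exp_i_diff)
  also have "\<dots> \<le> norm ((dg a b t - dg a b s) $ a)" by (rule Finite_Cartesian_Product.norm_nth_le)
  also have "\<dots> \<le> norm (dg a b t - dg a b s)" by (rule Finite_Cartesian_Product.norm_nth_le)
  finally show ?thesis .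
qed


definition stp :: "'n::finite cmat list \<Rightarrow> nat \<times> bool \<Rightarrow> 'n cmat \<Rightarrow> 'n cmat" where
  "stp gs x M = (if snd x then gs ! fst x else matrix_inv (gs ! fst x)) ** M"

definition expd :: "nat \<times> int \<Rightarrow> (nat \<times> bool) list" where
  "expd x = replicate (nat \<bar>snd x\<bar>) (fst x, snd x \<ge> 0)"

lemma iter_mul: "((\<lambda>M. (g::'n::finite cmat) ** M) ^^ k) (mat 1) ** M = ((\<lambda>M. g ** M) ^^ k) (M::'n::finite cmat)"
  by (induction k) (simp_all add: matrix_mul_lid, metis matrix_mul_assoc)

lemma ipow_expd: "mat_ipow (gs ! i) n ** M = foldr (stp gs) (expd (i, n)) M"
proof -
  have a: "stp gs (i, True) = (\<lambda>M. gs ! i ** M)" by (simp add: stp_def fun_eq_iff)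
  have b: "stp gs (i, False) = (\<lambda>M. matrix_inv (gs ! i) ** M)" by (simp add: stp_def fun_eq_iff)
  show ?thesis
    by (simp add: mat_ipow_def expd_def foldr_replicate iter_mul a b)
qed

lemma word_expd: "foldr (\<lambda>(i, n) M. mat_ipow (gs ! i) n ** M) w M = foldr (stp gs) (concat (map expd w)) M"
  by (induction w arbitrary: M) (auto simp: ipow_expd)

lemma word_expd_set: "valid_word gs w \<Longrightarrow> set (concat (map expd w)) \<subseteq> {..<length gs} \<times> UNIV"
  by (auto simp: valid_word_def expd_def)

lemma word_expd_len: "length (concat (map expd w)) = word_cost w"
  by (induction w) (auto simp: word_cost_def expd_def)

lemma word_expd_val: "foldr (stp gs) (concat (map expd w)) (mat 1) = word_val gs w"
  by (simp add: word_val_def word_expd)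



lemma avoid:
  fixes F :: "nat \<Rightarrow> 'b set" and P :: "nat \<Rightarrow> 'b \<Rightarrow> real set" and r :: "nat \<Rightarrow> real"
  assumes a: "0 < a"
    and fin: "\<And>c. finite (F c)"
    and r0: "\<And>c. 0 \<le> r c"
    and diam: "\<And>c x t s. x \<in> F c \<Longrightarrow> t \<in> P c x \<Longrightarrow> s \<in> P c x \<Longrightarrow> \<bar>t - s\<bar> \<le> 4 * r c"
    and small: "\<And>c. real (card (F c)) * r c \<le> a / 32 * (1/2)^c"
  shows "\<exists>t\<in>{0..a}. \<forall>c. \<forall>x\<in>F c. t \<notin> P c x"
proof (rule ccontr)
  define J where "J c x = (if P c x = {} then {} else cball (SOME t. t \<in> P c x) (4 * r c))" for c x
  assume "\<not> ?thesis"
  then have ex: "\<forall>t\<in>{0..a}. \<exists>c. \<exists>x\<in>F c. t \<in> P c x" by blast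
  have inJ: "t \<in> J c x" if "x \<in> F c" "t \<in> P c x" for c x t
  proof -
    have ne: "P c x \<noteq> {}" using that by auto
    then have "(SOME t. t \<in> P c x) \<in> P c x" by (simp add: some_in_eq)
    then have "\<bar>(SOME t. t \<in> P c x) - t\<bar> \<le> 4 * r c" using diam that by blast
    then show ?thesis using ne by (simp add: J_def dist_real_def)
  qed
  have cov: "{0..a} \<subseteq> (\<Union>c. \<Union>x\<in>F c. J c x)"
  proof
    fix t assume "t \<in> {0..a}"
    then obtain c x where "x \<in> F c" "t \<in> P c x" using ex by blast
    then have "t \<in> J c x" by (rule inJ)
    then show "t \<in> (\<Union>c. \<Union>x\<in>F c. J c x)" using \<open>x \<in> F c\<close> by blast
  qed
  have Jm: "J c x \<in> sets lborel" for c x by (simp add: J_def)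
  have Jle: "emeasure lborel (J c x) \<le> ennreal (8 * r c)" for c x
    using r0[of c] by (simp add: J_def cball_eq_atLeastAtMost emeasure_lborel_Icc_eq)
  have Ble: "emeasure lborel (\<Union>x\<in>F c. J c x) \<le> ennreal (a / 4 * (1/2)^c)" for c
  proof -
    have "emeasure lborel (\<Union>x\<in>F c. J c x) \<le> (\<Sum>x\<in>F c. emeasure lborel (J c x))"
      using fin Jm by (intro emeasure_subadditive_finite) auto
    also have "\<dots> \<le> (\<Sum>x\<in>F c. ennreal (8 * r c))" by (intro sum_mono Jle)
    also have "\<dots> = ennreal (real (card (F c)) * (8 * r c))" by (simp add: ennreal_of_nat_eq_real_of_nat ennreal_mult' r0)
    also have "\<dots> \<le> ennreal (a / 4 * (1/2)^c)" using small[of c] by (intro ennreal_leI) simp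
    finally show ?thesis .
  qed
  have Bm: "(\<Union>x\<in>F c. J c x) \<in> sets lborel" for c
    using fin Jm by (intro sets.finite_UN) auto
  have Um: "(\<Union>c. \<Union>x\<in>F c. J c x) \<in> sets lborel"
    by (rule sets.countable_UN[of _ UNIV]) (use Bm in auto)
  have "ennreal a = emeasure lborel {0..a}" using a by simp
  also have "\<dots> \<le> emeasure lborel (\<Union>c. \<Union>x\<in>F c. J c x)" using cov Um by (intro emeasure_mono)
  also have "\<dots> \<le> (\<Sum>c. emeasure lborel (\<Union>x\<in>F c. J c x))"
    by (intro emeasure_subadditive_countably) (use fin Jm in auto)
  also have "\<dots> \<le> (\<Sum>c. ennreal (a / 4 * (1/2)^c))" by (intro suminf_le Ble) auto
  also have "\<dots> = ennreal (a / 2)"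
  proof (rule suminf_ennreal_eq)
    show "(\<lambda>c. a / 4 * (1 / 2) ^ c) sums (a / 2)"
      using sums_mult[OF geometric_sums[of "1/2::real"], of "a/4"] by simp
  qed (use a in simp)
  finally have "a \<le> a / 2" using a by (simp add: ennreal_le_iff)
  then show False using a by simp
qed

lemma mat_sub_ldistrib: "(A::'n::finite cmat) ** (B - C) = A ** B - A ** C"
  by (simp add: matrix_matrix_mult_def vec_eq_iff sum_subtractf right_diff_distrib)

theorem theorem1:
  fixes gs :: "('n::finite) cmat list"
  assumes "CARD('n) \<ge> 2"
    and "\<forall>g \<in> set gs. g \<in> SU \<and> algebraic_mat g"
    and "SU \<subseteq> closure (generated_group gs)"
  shows "\<forall>U \<in> SU. \<forall>\<delta>>0. \<exists>U' \<in> SU. hs_norm (U - U') < \<delta> \<and>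
           (\<exists>D>1. \<exists>c::real. \<forall>\<^sub>F eps in at_right 0.
              real (gate_complexity gs eps U') > (1 / ln D) * ln (1 / eps) + c)"
proof (intro ballI allI impI)
  fix U :: "'n cmat" and \<delta> :: real
  assume U: "U \<in> SU" and \<delta>: "\<delta> > 0"
  have "\<not> card (UNIV::'n set) \<le> Suc 0" using assms(1) by simp
  then obtain a b :: 'n where ab: "a \<noteq> b" using card_le_Suc0_iff_eq[of "UNIV::'n set"] by auto
  have Uu: "adjoint_mat U ** U = mat 1" using U by (simp add: SU_def)
  define K where "K = sqrt (real CARD('n))"
  have K0: "0 \<le> K" by (simp add: K_def)
  define a0 where "a0 = min 1 (\<delta> / (K + 1))"
  have a0: "0 < a0" "a0 \<le> 1" "K * a0 < \<delta>"
  proof -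
    show "0 < a0" "a0 \<le> 1" using \<delta> K0 by (auto simp: a0_def)
    have "K * a0 \<le> K * (\<delta> / (K + 1))" using K0 by (intro mult_left_mono) (auto simp: a0_def)
    also have "\<dots> < \<delta>" using K0 \<delta> by (simp add: field_simps)
    finally show "K * a0 < \<delta>" .
  qed
  define A where "A = {..<length gs} \<times> (UNIV::bool set)"
  have finA: "finite A" by (simp add: A_def)
  define N where "N = real (card A) + 1"
  have N1: "1 \<le> N" by (simp add: N_def)
  define \<kappa> where "\<kappa> = a0 / 32"
  have \<kappa>0: "0 < \<kappa>" using a0 by (simp add: \<kappa>_def)
  define r where "r c = \<kappa> / (2 * N) ^ c" for c :: nat
  define F where "F c = {xs. set xs \<subseteq> A \<and> length xs = c}" for c
  define P where "P c xs = {t\<in>{0..a0}. norm (U ** dg a b t - foldr (stp gs) xs (mat 1)) < r c}" for c xs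
  have "\<exists>t\<in>{0..a0}. \<forall>c. \<forall>x\<in>F c. t \<notin> P c x"
  proof (rule avoid)
    show "0 < a0" by (rule a0)
    show "finite (F c)" for c unfolding F_def using finA by (rule finite_lists_length_eq)
    show "0 \<le> r c" for c using \<kappa>0 N1 by (simp add: r_def)
    show "\<bar>t - s\<bar> \<le> 4 * r c" if "x \<in> F c" "t \<in> P c x" "s \<in> P c x" for c x t s
    proof -
      let ?V = "foldr (stp gs) x (mat 1)"
      have ts: "\<bar>t - s\<bar> \<le> 1" using that a0 by (auto simp: P_def)
      have "norm (dg a b t - dg a b s) = norm (U ** (dg a b t - dg a b s))" using unit_norm[OF Uu] by simp
      also have "U ** (dg a b t - dg a b s) = (U ** dg a b t - ?V) - (U ** dg a b s - ?V)"
        by (simp add: mat_sub_ldistrib)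
      also have "norm \<dots> \<le> norm (U ** dg a b t - ?V) + norm (U ** dg a b s - ?V)" by (rule norm_triangle_ineq4)
      also have "\<dots> \<le> 2 * r c" using that by (auto simp: P_def)
      finally show ?thesis using dg_sep[OF ts, of a b] by simp
    qed
    show "real (card (F c)) * r c \<le> a0 / 32 * (1 / 2) ^ c" for c
    proof -
      have "card (F c) = card A ^ c" unfolding F_def by (rule card_lists_length_eq[OF finA])
      then have "real (card (F c)) * r c = (real (card A) / N) ^ c * (\<kappa> / 2 ^ c)"
        by (simp add: r_def power_mult_distrib power_divide)
      also have "\<dots> \<le> 1 * (\<kappa> / 2 ^ c)"
        using N1 \<kappa>0 by (intro mult_right_mono power_le_one) (auto simp: N_def)
      finally show ?thesis by (simp add: \<kappa>_def power_divide)
    qed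
  qed
  then obtain t where t: "t \<in> {0..a0}" and tP: "\<And>c x. x \<in> F c \<Longrightarrow> t \<notin> P c x" by blast
  define U' where "U' = U ** dg a b t"
  have U'SU: "U' \<in> SU" unfolding U'_def by (rule SU_mult[OF U dg_SU[OF ab]])
  have "hs_norm (U - U') = norm (U ** (mat 1 - dg a b t))"
    by (simp add: hs_norm_eq U'_def mat_sub_ldistrib)
  also have "\<dots> = norm (mat 1 - dg a b t)" by (rule unit_norm[OF Uu])
  also have "\<dots> \<le> K * \<bar>t\<bar>" unfolding K_def by (rule dg_close)
  also have "\<dots> \<le> K * a0" using t K0 by (intro mult_left_mono) auto
  finally have close: "hs_norm (U - U') < \<delta>" using a0 by simp
  have sep: "r (word_cost w) \<le> norm (word_val gs w - U')" if "valid_word gs w" for w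
  proof -
    let ?x = "concat (map expd w)"
    have "?x \<in> F (word_cost w)"
      using word_expd_set[OF that] word_expd_len by (auto simp: F_def A_def)
    then have "t \<notin> P (word_cost w) ?x" by (rule tP)
    then show ?thesis using t by (auto simp: P_def word_expd_val U'_def norm_minus_commute)
  qed
  define D where "D = 2 * N"
  have D1: "D > 1" using N1 by (simp add: D_def)
  have lnD: "ln D > 0" using D1 by simp
  have main: "real (gate_complexity gs eps U') > (1 / ln D) * ln (1 / eps) + ln \<kappa> / ln D" if eps: "eps > 0" for eps
  proof -
    have "U' \<in> closure (generated_group gs)" using U'SU assms(3) by blast
    then obtain y where "y \<in> generated_group gs" "dist y U' < eps"
      using eps closure_approachable by metis
    then obtain w where "valid_word gs w" "hs_norm (word_val gs w - U') < eps"
      by (auto simp: generated_group_def dist_norm hs_norm_eq)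
    then have ex: "\<exists>c. \<exists>w. valid_word gs w \<and> word_cost w = c \<and> hs_norm (word_val gs w - U') < eps" by blast
    from LeastI_ex[OF ex] obtain w' where w': "valid_word gs w'" "word_cost w' = gate_complexity gs eps U'"
      "hs_norm (word_val gs w' - U') < eps"
      unfolding gate_complexity_def by blast
    define g where "g = gate_complexity gs eps U'"
    have "r g < eps" using sep[OF w'(1)] w' by (simp add: g_def hs_norm_eq)
    then have "\<kappa> / D ^ g < eps" by (simp add: r_def D_def)
    moreover have "0 < \<kappa> / D ^ g" using \<kappa>0 D1 by simp
    ultimately have "ln (\<kappa> / D ^ g) < ln eps" using ln_less_cancel_iff eps by blast
    then have "ln \<kappa> - real g * ln D < ln eps" using \<kappa>0 D1 by (simp add: ln_div ln_realpow)
    then have "ln \<kappa> - ln eps < real g * ln D" by simp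
    then have "(ln \<kappa> - ln eps) / ln D < real g" using lnD by (simp add: divide_less_eq)
    moreover have "(1 / ln D) * ln (1 / eps) + ln \<kappa> / ln D = (ln \<kappa> - ln eps) / ln D"
      using eps by (simp add: ln_div diff_divide_distrib)
    ultimately show ?thesis by (simp add: g_def)
  qed
  show "\<exists>U'\<in>SU. hs_norm (U - U') < \<delta> \<and> (\<exists>D>1. \<exists>c. \<forall>\<^sub>F eps in at_right 0.
          (1 / ln D) * ln (1 / eps) + c < real (gate_complexity gs eps U'))"
  proof (intro bexI conjI exI)
    show "\<forall>\<^sub>F eps in at_right 0. (1 / ln D) * ln (1 / eps) + ln \<kappa> / ln D < real (gate_complexity gs eps U')"
      using eventually_at_right_less[of "0::real"] by (rule eventually_mono) (rule main)
  qed (use U'SU close D1 in auto)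
qed

end
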